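(* For every finite simple undirected graph $G$ and every nonnegative integer $k$, $\chi(\mathsf{TS}_k(G)) \leq \chi(J(\chi(G), k))$.
   Context: $\chi(H)$ is the chromatic number of $H$ (zero for the graph with no vertices). A $k$-clique is a set of $k$ pairwise adjacent vertices. $\mathsf{TS}_k(G)$ is the graph whose vertices are the $k$-cliques of $G$, two $k$-cliques $C, C'$ being adjacent iff there are vertices $u,v$ with $C \setminus C' = \{u\}$, $C' \setminus C = \{v\}$ and $uv \in E(G)$. The Johnson graph $J(n,k)$ has as vertices the $k$-element subsets of an $n$-element set, two being adjacent iff their intersection has exactly $k-1$ elements. *)

theory Defs
  imports Main
begin

definition simple_graph :: "'a set \<Rightarrow> 'a set set \<Rightarrow> bool" where
  "simple_graph V E \<longleftrightarrow> finite V \<and>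
     (\<forall>e\<in>E. \<exists>u v. e = {u, v} \<and> u \<noteq> v \<and> u \<in> V \<and> v \<in> V)"

definition proper_colouring :: "'a set \<Rightarrow> 'a set set \<Rightarrow> ('a \<Rightarrow> nat) \<Rightarrow> nat \<Rightarrow> bool" where
  "proper_colouring V E f n \<longleftrightarrow> f ` V \<subseteq> {..<n} \<and>
     (\<forall>u\<in>V. \<forall>v\<in>V. {u, v} \<in> E \<longrightarrow> f u \<noteq> f v)"

definition chromatic_number :: "'a set \<Rightarrow> 'a set set \<Rightarrow> nat" where
  "chromatic_number V E = (LEAST n. \<exists>f. proper_colouring V E f n)"

definition is_clique :: "'a set \<Rightarrow> 'a set set \<Rightarrow> nat \<Rightarrow> 'a set \<Rightarrow> bool" where
  "is_clique V E k C \<longleftrightarrow> C \<subseteq> V \<and> card C = k \<and>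
     (\<forall>u\<in>C. \<forall>v\<in>C. u \<noteq> v \<longrightarrow> {u, v} \<in> E)"

definition TS_vertices :: "'a set \<Rightarrow> 'a set set \<Rightarrow> nat \<Rightarrow> 'a set set" where
  "TS_vertices V E k = {C. is_clique V E k C}"

definition TS_edges :: "'a set \<Rightarrow> 'a set set \<Rightarrow> nat \<Rightarrow> 'a set set set" where
  "TS_edges V E k = {{C, C'} | C C'. C \<in> TS_vertices V E k \<and> C' \<in> TS_vertices V E k \<and>
     (\<exists>u v. C - C' = {u} \<and> C' - C = {v} \<and> {u, v} \<in> E)}"

definition johnson_vertices :: "nat \<Rightarrow> nat \<Rightarrow> nat set set" where
  "johnson_vertices n k = {A. A \<subseteq> {..<n} \<and> card A = k}"

definition johnson_edges :: "nat \<Rightarrow> nat \<Rightarrow> nat set set set" where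
  "johnson_edges n k = {{A, B} | A B. A \<in> johnson_vertices n k \<and> B \<in> johnson_vertices n k \<and>
     card (A \<inter> B) + 1 = k}"

end

theory Submission
  imports Defs
begin

lemma colouring_exists:
  assumes "finite V" "\<forall>v\<in>V. {v} \<notin> E"
  shows "\<exists>n f. proper_colouring V E f n"
proof -
  obtain f :: "'a \<Rightarrow> nat" and n :: nat where f: "f ` V = {i. i < n}" "inj_on f V"
    using finite_imp_inj_to_nat_seg[OF assms(1)] by blast
  have "proper_colouring V E f n"
    unfolding proper_colouring_def
  proof (intro conjI ballI impI)
    show "f ` V \<subseteq> {..<n}" using f by auto
  next
    fix u v assume "u \<in> V" "v \<in> V" "{u, v} \<in> E"
    then have "u \<noteq> v" using assms(2) by auto
    then show "f u \<noteq> f v" using f(2) \<open>u \<in> V\<close> \<open>v \<in> V\<close> by (meson inj_on_eq_iff)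
  qed
  then show ?thesis by blast
qed

lemma chromatic_attained:
  assumes "\<exists>n f. proper_colouring V E f n"
  shows "\<exists>f. proper_colouring V E f (chromatic_number V E)"
  unfolding chromatic_number_def using LeastI_ex[of "\<lambda>n. \<exists>f. proper_colouring V E f n"] assms
  by blast

lemma johnson_finite: "finite (johnson_vertices n k)"
proof -
  have "johnson_vertices n k \<subseteq> Pow {..<n}" unfolding johnson_vertices_def by auto
  then show ?thesis by (rule finite_subset) simp
qed

lemma johnson_noloop: "\<forall>v\<in>johnson_vertices n k. {v} \<notin> johnson_edges n k"
proof (intro ballI notI)
  fix A assume A: "A \<in> johnson_vertices n k" "{A} \<in> johnson_edges n k"
  then obtain B C where "{A} = {B, C}" "B \<in> johnson_vertices n k" "C \<in> johnson_vertices n k"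
     "card (B \<inter> C) + 1 = k" unfolding johnson_edges_def by blast
  then have "B = A" "C = A" by (metis insert_iff singletonD)+
  then show False using \<open>card (B \<inter> C) + 1 = k\<close> A(1) unfolding johnson_vertices_def by auto
qed

theorem proposition3p3:
  fixes V :: "'a set" and E :: "'a set set" and k :: nat
  assumes "simple_graph V E"
  shows "chromatic_number (TS_vertices V E k) (TS_edges V E k)
           \<le> chromatic_number (johnson_vertices (chromatic_number V E) k)
                                (johnson_edges (chromatic_number V E) k)"
proof -
  let ?n = "chromatic_number V E"
  let ?m = "chromatic_number (johnson_vertices ?n k) (johnson_edges ?n k)"
  have finV: "finite V" and edg: "\<forall>e\<in>E. \<exists>u v. e = {u, v} \<and> u \<noteq> v \<and> u \<in> V \<and> v \<in> V"
    using assms unfolding simple_graph_def by auto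
  have noloop: "\<forall>v\<in>V. {v} \<notin> E"
  proof (intro ballI notI)
    fix v assume "{v} \<in> E"
    then obtain a b where "{v} = {a, b}" "a \<noteq> b" using edg by blast
    then show False by (metis insert_iff singletonD)
  qed
  obtain f where f: "proper_colouring V E f ?n"
    using chromatic_attained colouring_exists[OF finV noloop] by blast
  obtain g where g: "proper_colouring (johnson_vertices ?n k) (johnson_edges ?n k) g ?m"
    using chromatic_attained colouring_exists[OF johnson_finite johnson_noloop] by blast
  have fr: "f ` V \<subseteq> {..<?n}" and fp: "\<And>u v. u \<in> V \<Longrightarrow> v \<in> V \<Longrightarrow> {u, v} \<in> E \<Longrightarrow> f u \<noteq> f v"
    using f unfolding proper_colouring_def by auto
  have gr: "g ` johnson_vertices ?n k \<subseteq> {..<?m}"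
    and gp: "\<And>A B. A \<in> johnson_vertices ?n k \<Longrightarrow> B \<in> johnson_vertices ?n k \<Longrightarrow>
       {A, B} \<in> johnson_edges ?n k \<Longrightarrow> g A \<noteq> g B"
    using g unfolding proper_colouring_def by auto
  have injC: "inj_on f C" if "is_clique V E k C" for C
  proof (rule inj_onI, rule ccontr)
    fix x y assume "x \<in> C" "y \<in> C" "f x = f y" "x \<noteq> y"
    have "x \<in> V" "y \<in> V" "{x, y} \<in> E" using that \<open>x \<in> C\<close> \<open>y \<in> C\<close> \<open>x \<noteq> y\<close>
      unfolding is_clique_def by auto
    then show False using fp \<open>f x = f y\<close> by blast
  qed
  have JV: "f ` C \<in> johnson_vertices ?n k" if "C \<in> TS_vertices V E k" for C
  proof -
    have c: "is_clique V E k C" using that unfolding TS_vertices_def by auto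
    then have "card (f ` C) = k" using injC card_image unfolding is_clique_def by metis
    moreover have "f ` C \<subseteq> {..<?n}" using c fr unfolding is_clique_def by blast
    ultimately show ?thesis unfolding johnson_vertices_def by auto
  qed
  have key: "card (f ` C \<inter> f ` D) + 1 = k"
    if C: "is_clique V E k C" and D: "is_clique V E k D"
      and u: "C - D = {u}" and v: "D - C = {v}" and uv: "{u, v} \<in> E" for C D u v
  proof -
    have uC: "u \<in> C" "u \<notin> D" using u by auto
    have vD: "v \<in> D" "v \<notin> C" using v by auto
    have CV: "C \<subseteq> V" and DV: "D \<subseteq> V" using C D unfolding is_clique_def by auto
    have fuv: "f u \<noteq> f v" using fp uv CV DV uC vD by blast
    have eq: "f ` C \<inter> f ` D = f ` (C \<inter> D)"
    proof
      show "f ` (C \<inter> D) \<subseteq> f ` C \<inter> f ` D" by auto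
    next
      show "f ` C \<inter> f ` D \<subseteq> f ` (C \<inter> D)"
      proof
        fix z assume "z \<in> f ` C \<inter> f ` D"
        then obtain x y where x: "x \<in> C" "y \<in> D" "z = f x" "f x = f y" by auto
        show "z \<in> f ` (C \<inter> D)"
        proof (cases "x \<in> D")
          case True then show ?thesis using x by (metis IntI image_eqI)
        next
          case False
          then have "x = u" using u x by auto
          show ?thesis
          proof (cases "y \<in> C")
            case True
            then have "y \<noteq> u" using uC x(2) by auto
            have cq: "\<forall>a\<in>C. \<forall>b\<in>C. a \<noteq> b \<longrightarrow> {a, b} \<in> E" using C unfolding is_clique_def by simp
            then have "{u, y} \<in> E" using \<open>y \<noteq> u\<close> True uC(1) by metis
            moreover have "u \<in> V" "y \<in> V" using CV True uC(1) by auto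
            ultimately have "f u \<noteq> f y" using fp by blast
            then show ?thesis using x \<open>x = u\<close> by simp
          next
            case False
            then have "y = v" using v x by auto
            then show ?thesis using fuv x \<open>x = u\<close> by simp
          qed
        qed
      qed
    qed
    have finC: "finite C" using CV finV finite_subset by blast
    have cardC: "card C = k" using C unfolding is_clique_def by auto
    have "C = insert u (C \<inter> D)" using u by auto
    then have "card C = card (C \<inter> D) + 1" using finC uC
      by (metis Int_iff card_insert_disjoint finite_Int Suc_eq_plus1)
    moreover have "card (f ` (C \<inter> D)) = card (C \<inter> D)"
      using injC[OF C] by (meson card_image inf_le1 inj_on_subset)
    ultimately show ?thesis using eq cardC by simp
  qed
  have "proper_colouring (TS_vertices V E k) (TS_edges V E k) (\<lambda>C. g (f ` C)) ?m"
    unfolding proper_colouring_def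
  proof (intro conjI ballI impI)
    show "(\<lambda>C. g (f ` C)) ` TS_vertices V E k \<subseteq> {..<?m}" using JV gr by blast
  next
    fix C D assume CD: "C \<in> TS_vertices V E k" "D \<in> TS_vertices V E k" "{C, D} \<in> TS_edges V E k"
    have "\<exists>C' D'. {C, D} = {C', D'} \<and> C' \<in> TS_vertices V E k \<and> D' \<in> TS_vertices V E k \<and>
     (\<exists>u v. C' - D' = {u} \<and> D' - C' = {v} \<and> {u, v} \<in> E)"
      using CD(3) unfolding TS_edges_def by (simp only: mem_Collect_eq)
    then obtain C' D' where e0: "{C, D} = {C', D'}" "C' \<in> TS_vertices V E k" "D' \<in> TS_vertices V E k"
      "\<exists>u v. C' - D' = {u} \<and> D' - C' = {v} \<and> {u, v} \<in> E" by (elim exE conjE) (rule that, assumption+, blast)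
    then obtain u v where "C' - D' = {u}" "D' - C' = {v}" "{u, v} \<in> E" by (elim exE conjE)
    note e = e0(1-3) this
    have cl: "is_clique V E k C'" "is_clique V E k D'" using e(2,3) unfolding TS_vertices_def by auto
    have k1: "card (f ` C' \<inter> f ` D') + 1 = k"
      by (rule key[OF cl e(4) e(5) e(6)])
    have "(C = C' \<and> D = D') \<or> (C = D' \<and> D = C')" using e(1) by (simp add: doubleton_eq_iff)
    then have "card (f ` C \<inter> f ` D) + 1 = k" using k1 by (auto simp: Int_commute)
    then have "{f ` C, f ` D} \<in> johnson_edges ?n k"
      unfolding johnson_edges_def using JV CD by blast
    then show "g (f ` C) \<noteq> g (f ` D)" using gp JV CD by blast
  qed
  then have "\<exists>h. proper_colouring (TS_vertices V E k) (TS_edges V E k) h ?m" by blast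
  then show ?thesis unfolding chromatic_number_def by (rule Least_le)
qed

end
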